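(* Let $h\in A$ be of the form $h=\sum_{i=1}^n\frac{h_i}{de}\omega_i$ with $h_i,d\in K[x]$ such that $\gcd(d,e)=\gcd(h_1,\ldots,h_n,d)=1$ and $d$ squarefree. Let $U$ be an integral basis of $A$ and let $T\in K[x]^{n\times n}$ be such that $W=TU$. If $h$ is integrable in $A$, i.e., there exist $u\in K[x]$ and $q=(q_1,\ldots,q_n)\in K[x]^n$ such that \[h=\Big(\sum_{i=1}^n\frac{q_i}{u}\omega_i\Big)^\prime\] and $\gcd(q_1,\ldots,q_n,u)=1$, then $u$ divides $\det(T)$. Hence $u^2$ divides $\operatorname{Disc}(W)/\operatorname{Disc}(U)$.
   Context: Let $K$ be a field of characteristic zero, $m\in K[x,y]$ irreducible over $K(x)$ with $n=\deg_y(m)$, and $A=K(x)[y]/\langle m\rangle$, with the derivation $'$ with respect to $x$. An element $f\in A$ is (globally) integral if all its Puiseux series expansions at every finite point $a\in\bar K$ have nonnegative valuation; an integral basis of $A$ is a basis of the $K[x]$-module of integral elements of $A$. An element $f\in A$ is integrable in $A$ if $f=g'$ for some $g\in A$. Let $W=(\omega_1,\ldots,\omega_n)$ be a suitable basis of $A$: a $K(x)$-vector space basis of $A$ consisting of integral elements such that, for $e\in K[x]$ and $M=(m_{i,j})\in K[x]^{n\times n}$ with $eW'=MW$ and $\gcd(e,m_{1,1},m_{1,2},\ldots,m_{n,n})=1$, the polynomial $e$ is squarefree. (The form of $h$ in the claim is that of the remainder produced by lazy Hermite reduction with respect to $W$.) The discriminant of a tuple $W=(\omega_1,\ldots,\omega_n)$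 is $\operatorname{Disc}(W)=\det(\operatorname{Tr}(\omega_i\omega_j))$, where $\operatorname{Tr}$ is the trace map from $A$ to $K(x)$; for tuples of integral elements it is a polynomial in $K[x]$. *)

theory Defs
  imports "HOL-Computational_Algebra.Polynomial_Factorial"
          "HOL-Computational_Algebra.Normalized_Fraction"
          "HOL-Computational_Algebra.Formal_Laurent_Series"
          "HOL-Computational_Algebra.Squarefree"
          "HOL-Algebra.Algebraic_Closure_Type"
          "Jordan_Normal_Form.Determinant"
begin

text \<open>
  K is a type 'a of class field_char_0.  K[x] is 'a poly, K(x) is
  'a poly fract.  The defining polynomial m in K[x][y] is an element of
  'a poly poly (outer variable y).  The algebra A = K(x)[y]/(m) is represented by
  the reduced representatives, i.e. polynomials in y over K(x) of degree < deg_y m;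
  products and derivatives are reduced modulo m.  Tuples (omega_1,...,omega_n) are
  functions nat => A, used on indices 0..n-1.
\<close>

type_synonym 'a rfun = "'a poly fract"
type_synonym 'a alg = "'a poly fract poly"

definition modulus :: "'a::{field_char_0,field_gcd} poly poly \<Rightarrow> 'a alg" where
  "modulus m = map_poly to_fract m"

definition amul :: "'a::{field_char_0,field_gcd} poly poly \<Rightarrow> 'a alg \<Rightarrow> 'a alg \<Rightarrow> 'a alg" where
  "amul m f g = (f * g) mod modulus m"

definition rf_deriv :: "'a::{field_char_0,field_gcd} rfun \<Rightarrow> 'a rfun" where
  "rf_deriv z = (let (p, q) = quot_of_fract z in
      to_fract (pderiv p * q - p * pderiv q) / to_fract (q ^ 2))"

text \<open>The derivative y' of the generator y in A, determined by m(x,y) = 0.\<close>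
definition y_deriv :: "'a::{field_char_0,field_gcd} poly poly \<Rightarrow> 'a alg" where
  "y_deriv m = (SOME Y. degree Y < degree m \<and>
      (map_poly rf_deriv (modulus m) + pderiv (modulus m) * Y) mod modulus m = 0)"

definition A_deriv :: "'a::{field_char_0,field_gcd} poly poly \<Rightarrow> 'a alg \<Rightarrow> 'a alg" where
  "A_deriv m f = (map_poly rf_deriv f + pderiv f * y_deriv m) mod modulus m"

definition lincomb :: "'a::{field_char_0,field_gcd} poly poly \<Rightarrow> (nat \<Rightarrow> 'a rfun) \<Rightarrow> (nat \<Rightarrow> 'a alg) \<Rightarrow> 'a alg" where
  "lincomb m c w = (\<Sum>i<degree m. smult (c i) (w i))"

text \<open>Trace of the K(x)-linear map g |-> f g on A (computed in the power basis 1,y,...,y^(n-1)).\<close>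
definition A_trace :: "'a::{field_char_0,field_gcd} poly poly \<Rightarrow> 'a alg \<Rightarrow> 'a rfun" where
  "A_trace m f = (\<Sum>k<degree m. coeff ((f * monom 1 k) mod modulus m) k)"

definition Disc :: "'a::{field_char_0,field_gcd} poly poly \<Rightarrow> (nat \<Rightarrow> 'a alg) \<Rightarrow> 'a rfun" where
  "Disc m w = det (mat (degree m) (degree m) (\<lambda>(i, j). A_trace m (amul m (w i) (w j))))"

text \<open>Puiseux expansions at a finite point a of the algebraic closure of K:
  with ramification index r >= 1 and t^r = x - a, a Puiseux series in x - a is a
  formal Laurent series in t.\<close>
definition poly_at :: "'a::{field_char_0,field_gcd} alg_closure \<Rightarrow> nat \<Rightarrow> 'a poly \<Rightarrow> 'a alg_closure fls" where
  "poly_at a r p = poly (map_poly (\<lambda>c. fls_const (to_ac c)) p) (fls_const a + fls_X ^ r)"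

definition rf_at :: "'a::{field_char_0,field_gcd} alg_closure \<Rightarrow> nat \<Rightarrow> 'a rfun \<Rightarrow> 'a alg_closure fls" where
  "rf_at a r z = poly_at a r (fst (quot_of_fract z)) / poly_at a r (snd (quot_of_fract z))"

text \<open>f is (globally) integral: at every finite point a, every Puiseux series
  expansion of f (obtained by substituting a Puiseux series root Y of m) has
  nonnegative valuation.\<close>
definition integral :: "'a::{field_char_0,field_gcd} poly poly \<Rightarrow> 'a alg \<Rightarrow> bool" where
  "integral m f \<longleftrightarrow>
     (\<forall>a r Y. r \<ge> 1 \<longrightarrow> poly (map_poly (poly_at a r) m) Y = 0 \<longrightarrow>
        fls_subdegree (poly (map_poly (rf_at a r) f) Y) \<ge> 0)"

definition is_basis :: "'a::{field_char_0,field_gcd} poly poly \<Rightarrow> (nat \<Rightarrow> 'a alg) \<Rightarrow> bool" where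
  "is_basis m w \<longleftrightarrow>
     (\<forall>i<degree m. degree (w i) < degree m) \<and>
     (\<forall>c. lincomb m c w = 0 \<longrightarrow> (\<forall>i<degree m. c i = 0)) \<and>
     (\<forall>f. degree f < degree m \<longrightarrow> (\<exists>c. f = lincomb m c w))"

definition integral_basis :: "'a::{field_char_0,field_gcd} poly poly \<Rightarrow> (nat \<Rightarrow> 'a alg) \<Rightarrow> bool" where
  "integral_basis m u \<longleftrightarrow>
     (\<forall>i<degree m. degree (u i) < degree m \<and> integral m (u i)) \<and>
     (\<forall>c. lincomb m (\<lambda>i. to_fract (c i)) u = 0 \<longrightarrow> (\<forall>i<degree m. c i = 0)) \<and>
     (\<forall>f. degree f < degree m \<longrightarrow> integral m f \<longrightarrow>
          (\<exists>c. f = lincomb m (\<lambda>i. to_fract (c i)) u))"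

definition deriv_rel :: "'a::{field_char_0,field_gcd} poly poly \<Rightarrow> (nat \<Rightarrow> 'a alg) \<Rightarrow> 'a poly \<Rightarrow> (nat \<Rightarrow> nat \<Rightarrow> 'a poly) \<Rightarrow> bool" where
  "deriv_rel m w e M \<longleftrightarrow>
     (\<forall>i<degree m. smult (to_fract e) (A_deriv m (w i)) = lincomb m (\<lambda>j. to_fract (M i j)) w)"

definition suitable_basis :: "'a::{field_char_0,field_gcd} poly poly \<Rightarrow> (nat \<Rightarrow> 'a alg) \<Rightarrow> bool" where
  "suitable_basis m w \<longleftrightarrow>
     is_basis m w \<and> (\<forall>i<degree m. integral m (w i)) \<and>
     (\<forall>e M. deriv_rel m w e M \<longrightarrow>
        Gcd ({e} \<union> {M i j |i j. i < degree m \<and> j < degree m}) = 1 \<longrightarrow> squarefree e)"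

end

theory Submission
  imports Defs
begin

context comm_ring_hom begin
lemma mp_add: "map_poly hom (p + q) = map_poly hom p + map_poly hom q"
  by (rule poly_eqI) (simp add: coeff_map_poly hom_add)
lemma mp_smult: "map_poly hom (smult c p) = smult (hom c) (map_poly hom p)"
  by (rule map_poly_smult) (auto simp: hom_mult)
lemma mp_pCons: "map_poly hom (pCons c p) = pCons (hom c) (map_poly hom p)"
  by (rule map_poly_pCons) simp
lemma mp_mult: "map_poly hom (p * q) = map_poly hom p * map_poly hom q"
  by (induction p) (simp_all add: mp_add mp_smult mp_pCons)
lemma mp_uminus: "map_poly hom (- p) = - map_poly hom p"
  by (rule poly_eqI) (simp add: coeff_map_poly hom_uminus)
lemma mp_diff: "map_poly hom (p - q) = map_poly hom p - map_poly hom q"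
  by (rule poly_eqI) (simp add: coeff_map_poly hom_minus)
lemma mp_one: "map_poly hom 1 = 1"
  by simp
lemma mp_sum: "map_poly hom (sum f S) = (\<Sum>x\<in>S. map_poly hom (f x))"
  by (induction S rule: infinite_finite_induct) (simp_all add: mp_add)
end
lemma (in idom_hom) mp_pderiv: "map_poly hom (pderiv p) = pderiv (map_poly hom p)"
  by (rule poly_eqI) (simp add: coeff_map_poly coeff_pderiv hom_mult hom_add hom_of_nat)

lemma to_ac_hom: "comm_ring_hom (to_ac :: 'a::field \<Rightarrow> 'a alg_closure)"
  by unfold_locales simp_all

lemma fls_const_hom: "comm_ring_hom (fls_const :: 'a::comm_ring_1 \<Rightarrow> 'a fls)"
  by unfold_locales (simp_all add: fls_plus_const)

lemma comp_hom: "comm_ring_hom f \<Longrightarrow> comm_ring_hom g \<Longrightarrow> comm_ring_hom (\<lambda>x. f (g x))"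
  unfolding comm_ring_hom_def ring_hom_def semiring_hom_def comm_monoid_add_hom_def
    monoid_mult_hom_def monoid_add_hom_def one_hom_def zero_hom_def semigroup_add_hom_def
    semigroup_mult_hom_def plus_hom_def times_hom_def ab_semigroup_add_hom_def
  by simp

lemma eval_hom:
  assumes "comm_ring_hom f"
  shows "comm_ring_hom (\<lambda>p. poly (map_poly f p) y)"
proof -
  interpret f: comm_ring_hom f by fact
  show ?thesis
    by unfold_locales (simp_all add: f.mp_add f.mp_mult)
qed

lemma poly_at_alt: "poly_at a r p = poly (map_poly fls_const (map_poly to_ac p)) (fls_const a + fls_X ^ r)"
  unfolding poly_at_def by (simp add: map_poly_map_poly o_def)

lemma pa_hom: "comm_ring_hom (poly_at a r)"
proof -
  have "comm_ring_hom (\<lambda>c. fls_const (to_ac c) :: 'a alg_closure fls)"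
    by (rule comp_hom[OF fls_const_hom to_ac_hom])
  from eval_hom[OF this] show ?thesis
    by (simp add: poly_at_def[abs_def])
qed

lemma mp_fls_fps:
  "poly (map_poly fls_const Q) (fls_const a + fls_X ^ r) =
   fps_to_fls (poly (map_poly fps_const Q) (fps_const a + fps_X ^ r))"
  by (induction Q) (simp_all add: map_poly_pCons fls_times_fps_to_fls fps_to_fls_power)

lemma fps_nth0:
  assumes "r \<ge> 1"
  shows "fps_nth (poly (map_poly fps_const Q) (fps_const a + fps_X ^ r)) 0 = poly Q a"
  using assms by (induction Q) (simp_all add: map_poly_pCons)

lemma poly_at_fps: "\<exists>F. poly_at a r p = fps_to_fls F"
  unfolding poly_at_alt mp_fls_fps by blast

lemma poly_at_ge0: "fls_subdegree (poly_at a r p) \<ge> 0"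
  using poly_at_fps[of a r p] fls_subdegree_fls_to_fps_gt0 by metis

lemma ord_lemma:
  fixes P :: "'b::field poly"
  assumes r: "r \<ge> 1" and P: "P \<noteq> 0"
  shows "poly (map_poly fls_const P) (fls_const a + fls_X ^ r) \<noteq> 0 \<and>
         fls_subdegree (poly (map_poly fls_const P) (fls_const a + fls_X ^ r)) = int (r * order a P)"
proof -
  interpret h: comm_ring_hom "\<lambda>p. poly (map_poly fls_const p) (fls_const a + fls_X ^ r :: 'b fls)"
    by (rule eval_hom[OF fls_const_hom])
  obtain Q where PQ: "P = [:- a, 1:] ^ order a P * Q" and nd: "\<not> [:- a, 1:] dvd Q"
    using order_decomp[OF P] by blast
  have Qa: "poly Q a \<noteq> 0" using nd poly_eq_0_iff_dvd by blast
  define G where "G = poly (map_poly fps_const Q) (fps_const a + fps_X ^ r)"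
  have G0: "fps_nth G 0 \<noteq> 0" using fps_nth0[OF r, of Q a] Qa unfolding G_def by simp
  have Gnz: "G \<noteq> 0" using G0 by auto
  have sG: "subdegree G = 0" using G0 by (simp add: subdegree_eq_0_iff)
  have lin: "poly (map_poly fls_const [:- a, 1:]) (fls_const a + fls_X ^ r) = (fls_X ^ r :: 'b fls)"
    by (simp add: map_poly_pCons)
  have eq: "poly (map_poly fls_const P) (fls_const a + fls_X ^ r) = fls_X ^ (r * order a P) * fps_to_fls G"
    apply (subst PQ)
    unfolding h.hom_mult h.hom_power lin
    by (simp add: power_mult G_def mp_fls_fps)
  have nz: "fps_to_fls G \<noteq> 0" using Gnz by simp
  have "fls_subdegree (fps_to_fls G) = 0" using sG by (simp add: fls_subdegree_fls_to_fps)
  then show ?thesis unfolding eq using nz by (simp add: fls_subdegree_mult)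
qed

lemma poly_at_ord:
  assumes r: "r \<ge> 1" and p: "p \<noteq> 0"
  shows "poly_at a r p \<noteq> 0 \<and> fls_subdegree (poly_at a r p) = int (r * order a (map_poly to_ac p))"
proof -
  have "map_poly to_ac p \<noteq> 0" using p by (simp add: map_poly_eq_0_iff)
  then show ?thesis unfolding poly_at_alt using ord_lemma[OF r] by blast
qed

lemma fract_rep: "\<exists>p q. q \<noteq> 0 \<and> (x :: 'a::{field_char_0,field_gcd} poly fract) = to_fract p / to_fract q"
proof -
  have "x = Fract (fst (quot_of_fract x)) (snd (quot_of_fract x))" by simp
  then show ?thesis by (metis Fract_conv_to_fract snd_quot_of_fract_nonzero)
qed

lemma rf_at_frac:
  assumes r: "r \<ge> 1" and q: "q \<noteq> 0"
  shows "rf_at a r (to_fract p / to_fract q) = poly_at a r p / poly_at a r q"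
proof -
  interpret h: comm_ring_hom "poly_at a r" by (rule pa_hom)
  define z where "z = to_fract p / to_fract q"
  obtain p' q' where pq: "quot_of_fract z = (p', q')" by (cases "quot_of_fract z")
  have q': "q' \<noteq> 0" using snd_quot_of_fract_nonzero[of z] pq by simp
  have "z = Fract p' q'" using Fract_quot_of_fract[of z] pq by simp
  then have "z = to_fract p' / to_fract q'" by (simp add: Fract_conv_to_fract)
  then have "to_fract p / to_fract q = to_fract p' / to_fract q'" using z_def by simp
  then have "to_fract (p * q') = to_fract (p' * q)" using q q' by (simp add: frac_eq_eq)
  then have "p * q' = p' * q" by (simp only: to_fract_eq_iff)
  then have e: "poly_at a r p * poly_at a r q' = poly_at a r p' * poly_at a r q" by (metis h.hom_mult)
  have nz: "poly_at a r q \<noteq> 0" "poly_at a r q' \<noteq> 0" using poly_at_ord r q q' by blast+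
  from e nz have "poly_at a r p / poly_at a r q = poly_at a r p' / poly_at a r q'" by (simp add: frac_eq_eq)
  then show ?thesis unfolding rf_at_def z_def[symmetric] pq by simp
qed

lemma rf_at_to_fract: "r \<ge> 1 \<Longrightarrow> rf_at a r (to_fract p) = poly_at a r p"
proof -
  interpret h: comm_ring_hom "poly_at a r" by (rule pa_hom)
  assume "r \<ge> 1"
  from rf_at_frac[OF this, of 1 a p] show ?thesis by simp
qed

lemma rf_hom: assumes r: "r \<ge> 1" shows "comm_ring_hom (rf_at a r)"
proof -
  interpret h: comm_ring_hom "poly_at a r" by (rule pa_hom)
  have nz: "q \<noteq> 0 \<Longrightarrow> poly_at a r q \<noteq> 0" for q using poly_at_ord r by blast
  have add: "rf_at a r (x + y) = rf_at a r x + rf_at a r y" for x y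
  proof -
    obtain p1 q1 where 1: "q1 \<noteq> 0" "x = to_fract p1 / to_fract q1" using fract_rep by blast
    obtain p2 q2 where 2: "q2 \<noteq> 0" "y = to_fract p2 / to_fract q2" using fract_rep by blast
    have e: "x + y = to_fract (p1 * q2 + p2 * q1) / to_fract (q1 * q2)" using 1 2 by (simp add: field_simps)
    have "rf_at a r (x + y) = poly_at a r (p1 * q2 + p2 * q1) / poly_at a r (q1 * q2)"
      unfolding e by (rule rf_at_frac[OF r]) (use 1 2 in simp)
    moreover have "rf_at a r x = poly_at a r p1 / poly_at a r q1" unfolding 1(2) by (rule rf_at_frac[OF r 1(1)])
    moreover have "rf_at a r y = poly_at a r p2 / poly_at a r q2" unfolding 2(2) by (rule rf_at_frac[OF r 2(1)])
    ultimately show ?thesis by (simp only: h.hom_add h.hom_mult add_frac_eq[OF nz[OF 1(1)] nz[OF 2(1)]])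
  qed
  have mult: "rf_at a r (x * y) = rf_at a r x * rf_at a r y" for x y
  proof -
    obtain p1 q1 where 1: "q1 \<noteq> 0" "x = to_fract p1 / to_fract q1" using fract_rep by blast
    obtain p2 q2 where 2: "q2 \<noteq> 0" "y = to_fract p2 / to_fract q2" using fract_rep by blast
    have e: "x * y = to_fract (p1 * p2) / to_fract (q1 * q2)" using 1 2 by (simp add: field_simps)
    have "rf_at a r (x * y) = poly_at a r (p1 * p2) / poly_at a r (q1 * q2)"
      unfolding e by (rule rf_at_frac[OF r]) (use 1 2 in simp)
    moreover have "rf_at a r x = poly_at a r p1 / poly_at a r q1" unfolding 1(2) by (rule rf_at_frac[OF r 1(1)])
    moreover have "rf_at a r y = poly_at a r p2 / poly_at a r q2" unfolding 2(2) by (rule rf_at_frac[OF r 2(1)])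
    ultimately show ?thesis by (simp only: h.hom_mult times_divide_times_eq)
  qed
  have one: "rf_at a r 1 = 1" using rf_at_to_fract[OF r, of a 1] by simp
  have zero: "rf_at a r 0 = 0" using rf_at_to_fract[OF r, of a 0] by simp
  show ?thesis by unfold_locales (simp_all add: add mult one zero)
qed

lemma chain:
  fixes P :: "'c::idom fls poly"
  shows "fls_deriv (poly P Y) = poly (map_poly fls_deriv P) Y + poly (pderiv P) Y * fls_deriv Y"
  by (induction P) (simp_all add: map_poly_pCons pderiv_pCons algebra_simps)

lemma poly_at_deriv:
  "fls_deriv (poly_at a r p) = of_nat r * fls_X ^ (r - 1) * poly_at a r (pderiv p)"
proof -
  define k where "k = (\<lambda>c. fls_const (to_ac c) :: 'a alg_closure fls)"
  have kh: "comm_ring_hom k" unfolding k_def by (rule comp_hom[OF fls_const_hom to_ac_hom])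
  interpret k: idom_hom k by (rule idom_hom.intro[OF kh])
  have pa: "poly_at a r p = poly (map_poly k p) (fls_const a + fls_X ^ r)" for p
    unfolding poly_at_def k_def ..
  have 0: "map_poly fls_deriv (map_poly k p) = 0"
    by (rule poly_eqI) (simp add: coeff_map_poly k_def)
  show ?thesis unfolding pa chain 0 k.mp_pderiv[symmetric]
    by (simp add: fls_deriv_X_power)
qed

definition rho :: "nat \<Rightarrow> 'b::comm_ring_1 fls" where
  "rho r = of_nat r * fls_X ^ (r - 1)"

lemma rf_at_deriv:
  assumes r: "r \<ge> 1"
  shows "fls_deriv (rf_at a r z) = rho r * rf_at a r (rf_deriv z)"
proof -
  interpret h: comm_ring_hom "poly_at a r" by (rule pa_hom)
  obtain p q where pq: "quot_of_fract z = (p, q)" by (cases "quot_of_fract z")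
  have q: "q \<noteq> 0" using snd_quot_of_fract_nonzero[of z] pq by simp
  have Q: "poly_at a r q \<noteq> 0" using poly_at_ord r q by blast
  have 1: "rf_at a r z = poly_at a r p / poly_at a r q" unfolding rf_at_def pq by simp
  have 2: "rf_at a r (rf_deriv z) = (poly_at a r (pderiv p) * poly_at a r q - poly_at a r p * poly_at a r (pderiv q)) / (poly_at a r q)^2"
    unfolding rf_deriv_def pq Let_def prod.case
    by (subst rf_at_frac[OF r]) (use q in \<open>simp_all add: h.hom_mult h.hom_minus h.hom_power\<close>)
  define P Q Pd Qd where "P = poly_at a r p" "Q = poly_at a r q" "Pd = poly_at a r (pderiv p)" "Qd = poly_at a r (pderiv q)"
  have dP: "fls_deriv P = rho r * Pd" and dQ: "fls_deriv Q = rho r * Qd"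
    unfolding P_Q_Pd_Qd_def rho_def poly_at_deriv by simp_all
  have Q': "Q \<noteq> 0" using Q P_Q_Pd_Qd_def by simp
  have "fls_deriv (P / Q) = P * fls_deriv (inverse Q) + fls_deriv P * inverse Q"
    by (simp add: divide_inverse)
  also have "\<dots> = P * (- (rho r * Qd) * (inverse Q)^2) + rho r * Pd * inverse Q"
    by (simp add: fls_inverse_deriv dP dQ)
  also have "\<dots> = rho r * ((Pd * Q - P * Qd) / Q^2)"
    using Q' by (simp add: field_simps power2_eq_square)
  finally show ?thesis unfolding 1 2 P_Q_Pd_Qd_def .
qed

instantiation fract :: (idom)
  "{unique_euclidean_ring, normalization_euclidean_semiring, normalization_semidom_multiplicative}"
begin
definition [simp]: "normalize_fract = (normalize_field :: 'a fract \<Rightarrow> _)"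
definition [simp]: "unit_factor_fract = (unit_factor_field :: 'a fract \<Rightarrow> _)"
definition [simp]: "modulo_fract = (mod_field :: 'a fract \<Rightarrow> _)"
definition [simp]: "euclidean_size_fract = (euclidean_size_field :: 'a fract \<Rightarrow> _)"
definition [simp]: "division_segment (x :: 'a fract) = 1"
instance
  by standard
    (simp_all add: dvd_field_iff field_split_simps split: if_splits)
end

instantiation fract :: (idom) euclidean_ring_gcd
begin
definition gcd_fract :: "'a fract \<Rightarrow> 'a fract \<Rightarrow> 'a fract" where
  "gcd_fract = Euclidean_Algorithm.gcd"
definition lcm_fract :: "'a fract \<Rightarrow> 'a fract \<Rightarrow> 'a fract" where
  "lcm_fract = Euclidean_Algorithm.lcm"
definition Gcd_fract :: "'a fract set \<Rightarrow> 'a fract" where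
 "Gcd_fract = Euclidean_Algorithm.Gcd"
definition Lcm_fract :: "'a fract set \<Rightarrow> 'a fract" where
 "Lcm_fract = Euclidean_Algorithm.Lcm"
instance by standard (simp_all add: gcd_fract_def lcm_fract_def Gcd_fract_def Lcm_fract_def)
end

instance fract :: (idom) semiring_gcd_mult_normalize ..
instance fract :: (idom) field_gcd ..

lemma of_nat_fract: "(of_nat n :: 'a::idom fract) = to_fract (of_nat n)"
  by (induction n) simp_all

instance fract :: ("{idom,ring_char_0}") ring_char_0
  by standard (auto intro!: injI simp: of_nat_fract)

lemma bez:
  fixes M :: "'a::{field_char_0,field_gcd} poly fract poly"
  assumes "irreducible M"
  shows "\<exists>s t. s * M + t * pderiv M = 1"
proof -
  have pe: "prime_elem M" using assms by (rule irreducible_imp_prime_elem)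
  have "degree M \<noteq> 0" using assms
    by (metis irreducible_def is_unit_iff_degree)
  then have d: "pderiv M \<noteq> 0" "degree (pderiv M) < degree M" by (auto simp: pderiv_eq_0_iff degree_pderiv)
  have "\<not> M dvd pderiv M" using d by (metis dvd_imp_degree_le leD)
  then have "coprime M (pderiv M)" using pe prime_elem_imp_coprime by blast
  then have "gcd M (pderiv M) = 1" by simp
  then show ?thesis using bezout_coefficients_fst_snd[of M "pderiv M"] by metis
qed

definition phi :: "'a::{field_char_0,field_gcd} alg_closure \<Rightarrow> nat \<Rightarrow> 'a alg_closure fls \<Rightarrow> 'a alg \<Rightarrow> 'a alg_closure fls" where
  "phi a r Y f = poly (map_poly (rf_at a r) f) Y"

lemma phi_hom: "r \<ge> 1 \<Longrightarrow> comm_ring_hom (phi a r Y)"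
  unfolding phi_def[abs_def] by (rule eval_hom[OF rf_hom])

lemma phi_smult: "r \<ge> 1 \<Longrightarrow> phi a r Y (smult c f) = rf_at a r c * phi a r Y f"
proof -
  assume r: "r \<ge> 1"
  interpret h: comm_ring_hom "rf_at a r" by (rule rf_hom[OF r])
  show ?thesis unfolding phi_def h.mp_smult by simp
qed

lemma phi_modulus: "r \<ge> 1 \<Longrightarrow> phi a r Y (modulus m) = poly (map_poly (poly_at a r) m) Y"
proof -
  assume r: "r \<ge> 1"
  interpret h: comm_ring_hom "rf_at a r" by (rule rf_hom[OF r])
  interpret h2: comm_ring_hom "poly_at a r" by (rule pa_hom)
  have "map_poly (rf_at a r) (map_poly to_fract m) = map_poly (poly_at a r) m"
    by (rule poly_eqI) (simp add: coeff_map_poly rf_at_to_fract[OF r])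
  then show ?thesis unfolding phi_def modulus_def by simp
qed

lemma rf_deriv_0: "rf_deriv 0 = 0"
  by (simp add: rf_deriv_def)

lemma phi_deriv:
  assumes r: "r \<ge> 1"
  shows "fls_deriv (phi a r Y f) = rho r * phi a r Y (map_poly rf_deriv f) + phi a r Y (pderiv f) * fls_deriv Y"
proof -
  interpret h: comm_ring_hom "rf_at a r" by (rule rf_hom[OF r])
  interpret h2: idom_hom "rf_at a r" by (rule idom_hom.intro) (rule rf_hom[OF r])
  have "map_poly fls_deriv (map_poly (rf_at a r) f) = smult (rho r) (map_poly (rf_at a r) (map_poly rf_deriv f))"
    by (rule poly_eqI) (simp add: coeff_map_poly rf_deriv_0 rf_at_deriv[OF r])
  then show ?thesis unfolding phi_def chain h2.mp_pderiv by simp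
qed

context
  fixes m :: "'a::{field_char_0,field_gcd} poly poly" and a r Y
  assumes irred: "irreducible (modulus m)"
    and r: "r \<ge> 1"
    and root: "poly (map_poly (poly_at a r) m) Y = 0"
begin

interpretation ph: comm_ring_hom "phi a r Y" by (rule phi_hom[OF r])

lemma phi_M: "phi a r Y (modulus m) = 0"
  using phi_modulus[OF r, of a Y m] root by simp

lemma phi_mod: "phi a r Y (f mod modulus m) = phi a r Y f"
proof -
  have "f = f div modulus m * modulus m + f mod modulus m" by simp
  then have "phi a r Y f = phi a r Y (f div modulus m) * phi a r Y (modulus m) + phi a r Y (f mod modulus m)"
    by (metis ph.hom_add ph.hom_mult)
  then show ?thesis using phi_M by simp
qed

lemma phi_dvd0: "modulus m dvd f \<Longrightarrow> phi a r Y f = 0"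
  using phi_mod[of f] by (simp add: mod_eq_0_iff_dvd[symmetric])

lemma deg_mod: "degree (modulus m) = degree m"
  unfolding modulus_def by (rule degree_map_poly) simp

lemma yd_exists:
  "\<exists>Yd. degree Yd < degree m \<and>
      (map_poly rf_deriv (modulus m) + pderiv (modulus m) * Yd) mod modulus m = 0"
proof -
  define M where "M = modulus m"
  define D where "D = map_poly rf_deriv M"
  obtain s t where st: "s * M + t * pderiv M = 1" using bez[OF irred] M_def by blast
  have Mnz: "M \<noteq> 0" using irred M_def by auto
  have degM: "degree M \<ge> 1" using irred M_def
    by (metis irreducible_def is_unit_iff_degree less_one not_less)
  define Yd where "Yd = (- (t * D)) mod M"
  have deg: "degree Yd < degree M"
  proof (cases "Yd = 0")
    case True then show ?thesis using degM by simp
  next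
    case False then show ?thesis unfolding Yd_def using degree_mod_less'[OF Mnz] Yd_def by simp
  qed
  have "M dvd (- (t * D)) - Yd" unfolding Yd_def by (rule dvd_minus_mod)
  then obtain k where k: "(- (t * D)) - Yd = M * k" by (elim dvdE)
  have Yd: "Yd = - (t * D) - M * k" using k by (simp add: algebra_simps)
  have "D + pderiv M * Yd = D * (s * M + t * pderiv M) - t * pderiv M * D - M * pderiv M * k"
    unfolding Yd by (simp only: st mult_1_right) (simp add: algebra_simps)
  also have "\<dots> = M * (D * s - pderiv M * k)"
    by (simp add: algebra_simps)
  finally have "M dvd D + pderiv M * Yd" by simp
  then show ?thesis using deg unfolding M_def[symmetric] D_def[symmetric] deg_mod[symmetric]
    by (intro exI[of _ Yd]) (simp add: mod_eq_0_iff_dvd)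
qed

lemma yd_prop:
  "degree (y_deriv m) < degree m \<and>
   (map_poly rf_deriv (modulus m) + pderiv (modulus m) * y_deriv m) mod modulus m = 0"
  unfolding y_deriv_def by (rule someI_ex[OF yd_exists])

lemma phi_pderiv_nz: "phi a r Y (pderiv (modulus m)) \<noteq> 0"
proof
  assume z: "phi a r Y (pderiv (modulus m)) = 0"
  obtain s t where st: "s * modulus m + t * pderiv (modulus m) = 1" using bez[OF irred] by blast
  have "phi a r Y (s * modulus m + t * pderiv (modulus m)) = 0"
    using z phi_M by (simp add: ph.hom_add ph.hom_mult)
  then show False using st by simp
qed

lemma Y_deriv: "fls_deriv Y = rho r * phi a r Y (y_deriv m)"
proof -
  define M where "M = modulus m"
  have e1: "phi a r Y (map_poly rf_deriv M) + phi a r Y (pderiv M) * phi a r Y (y_deriv m) = 0"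
    using phi_mod[of "map_poly rf_deriv M + pderiv M * y_deriv m"] yd_prop unfolding M_def
    by (simp add: ph.hom_add ph.hom_mult)
  have e2: "rho r * phi a r Y (map_poly rf_deriv M) + phi a r Y (pderiv M) * fls_deriv Y = 0"
    using phi_deriv[OF r, of a Y M] phi_M unfolding M_def by simp
  have "phi a r Y (pderiv M) * (fls_deriv Y - rho r * phi a r Y (y_deriv m)) =
     (rho r * phi a r Y (map_poly rf_deriv M) + phi a r Y (pderiv M) * fls_deriv Y)
     - rho r * (phi a r Y (map_poly rf_deriv M) + phi a r Y (pderiv M) * phi a r Y (y_deriv m))"
    by (simp add: algebra_simps)
  then have "phi a r Y (pderiv M) * (fls_deriv Y - rho r * phi a r Y (y_deriv m)) = 0"
    using e1 e2 by simp
  then show ?thesis using phi_pderiv_nz unfolding M_def by simp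
qed

lemma phi_A_deriv: "fls_deriv (phi a r Y f) = rho r * phi a r Y (A_deriv m f)"
  unfolding A_deriv_def phi_mod phi_deriv[OF r] Y_deriv
  by (simp add: ph.hom_add ph.hom_mult algebra_simps)

end

lemma sqf_coprime_pderiv:
  fixes p :: "'a::{field_char_0,field_gcd} poly"
  assumes sq: "squarefree p"
  shows "coprime p (pderiv p)"
proof (rule ccontr)
  assume nc: "\<not> coprime p (pderiv p)"
  have p0: "p \<noteq> 0" using sq by (metis squarefreeD dvd_0_right not_is_unit_0)
  obtain c where c: "c dvd p" "c dvd pderiv p" "\<not> is_unit c" using nc by (rule not_coprimeE)
  have "c \<noteq> 0" using c(1) p0 by auto
  then obtain q where q: "q dvd c" "prime q" using prime_divisor_exists c(3) by blast
  have qp: "q dvd p" "q dvd pderiv p" using q c dvd_trans by blast+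
  obtain k where k: "p = q * k" using qp(1) by (elim dvdE)
  have "pderiv p = q * pderiv k + k * pderiv q" unfolding k pderiv_mult ..
  then have "q dvd k * pderiv q" using qp(2) by (metis dvd_add_right_iff dvd_triv_left)
  then have "q dvd k \<or> q dvd pderiv q" using q(2) by (simp add: prime_dvd_mult_iff)
  moreover have "\<not> q dvd pderiv q"
  proof
    assume a: "q dvd pderiv q"
    have "q \<noteq> 0" "\<not> is_unit q" using q(2) by auto
    then have "degree q \<noteq> 0" by (metis is_unit_iff_degree)
    then have "pderiv q \<noteq> 0" "degree (pderiv q) < degree q" by (auto simp: pderiv_eq_0_iff degree_pderiv)
    then show False using a by (metis dvd_imp_degree_le leD)
  qed
  moreover have "\<not> q dvd k"
  proof
    assume "q dvd k"
    then have "q ^ 2 dvd p" unfolding k by (simp add: power2_eq_square mult_dvd_mono)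
    then have "is_unit q" using sq squarefreeD by blast
    then show False using q(2) by auto
  qed
  ultimately show False by blast
qed

lemma sqf_order:
  fixes p :: "'a::{field_char_0,field_gcd} poly"
  assumes sq: "squarefree p"
  shows "order a (map_poly to_ac p) \<le> 1"
proof -
  interpret h: idom_hom "to_ac :: 'a \<Rightarrow> 'a alg_closure" by (rule idom_hom.intro) (rule to_ac_hom)
  have p0: "p \<noteq> 0" using sq by (metis squarefreeD dvd_0_right not_is_unit_0)
  have "gcd p (pderiv p) = 1" using sqf_coprime_pderiv[OF sq] by simp
  then obtain s t where st: "s * p + t * pderiv p = 1" using bezout_coefficients_fst_snd[of p "pderiv p"] by metis
  define Q where "Q = map_poly to_ac p"
  have "map_poly to_ac s * Q + map_poly to_ac t * pderiv Q = 1"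
    using arg_cong[OF st, of "map_poly to_ac"] unfolding Q_def
    by (simp add: h.mp_add h.mp_mult h.mp_pderiv)
  then have "\<not> (poly Q x = 0 \<and> poly (pderiv Q) x = 0)" for x
    by (metis (no_types, lifting) add_0 mult_zero_right one_neq_zero poly_1 poly_add poly_mult)
  then have "rsquarefree Q" by (simp add: rsquarefree_roots)
  then show ?thesis unfolding Q_def rsquarefree_def by (metis le_refl zero_le_one)
qed

lemma ge0_add: "fls_subdegree (f::'b::comm_monoid_add fls) \<ge> 0 \<Longrightarrow> fls_subdegree g \<ge> 0 \<Longrightarrow> fls_subdegree (f + g) \<ge> 0"
  by (rule fls_subdegree_ge0I) simp

lemma ge0_sum: "(\<And>i. i \<in> A \<Longrightarrow> fls_subdegree (f i :: 'b::comm_monoid_add fls) \<ge> 0) \<Longrightarrow> fls_subdegree (sum f A) \<ge> 0"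
  by (induction A rule: infinite_finite_induct) (simp_all add: ge0_add)

lemma rho_props: "r \<ge> 1 \<Longrightarrow> rho r \<noteq> (0 :: 'b::field_char_0 fls) \<and> fls_subdegree (rho r :: 'b fls) = int r - 1"
  unfolding rho_def by (simp add: of_nat_diff)

lemma integral_g:
  fixes m :: "'a::{field_char_0,field_gcd} poly poly"
  assumes irred: "irreducible (modulus m)"
    and Wint: "\<forall>i<degree m. integral m (W i)"
    and sqf: "squarefree de"
    and h_def: "h = lincomb m (\<lambda>i. to_fract (hh i) / to_fract de) W"
    and hg: "h = A_deriv m g"
  shows "integral m g"
  unfolding integral_def
proof (intro allI impI)
  fix a r Y
  assume r: "1 \<le> r" and root: "poly (map_poly (poly_at a r) m) Y = 0"
  interpret ph: comm_ring_hom "phi a r Y" by (rule phi_hom[OF r])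
  interpret pa: comm_ring_hom "poly_at a r" by (rule pa_hom)
  have de0: "de \<noteq> 0" using sqf by (metis squarefreeD dvd_0_right not_is_unit_0)
  define P where "P = poly_at a r de"
  have P: "P \<noteq> 0" "fls_subdegree P = int (r * order a (map_poly to_ac de))"
    using poly_at_ord[OF r de0] P_def by auto
  have "r * order a (map_poly to_ac de) \<le> r * 1" using sqf_order[OF sqf, of a] by (rule mult_le_mono2)
  then have Pr: "fls_subdegree P \<le> int r" using P(2) by linarith
  define S where "S = (\<Sum>i<degree m. poly_at a r (hh i) * phi a r Y (W i))"
  have S: "fls_subdegree S \<ge> 0" unfolding S_def
  proof (rule ge0_sum)
    fix i assume i: "i \<in> {..<degree m}"
    have "fls_subdegree (phi a r Y (W i)) \<ge> 0"
      using Wint i r root unfolding integral_def phi_def by auto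
    then show "fls_subdegree (poly_at a r (hh i) * phi a r Y (W i)) \<ge> 0"
      using poly_at_ge0 by (intro fls_mult_subdegree_ge_0) auto
  qed
  have phih: "phi a r Y h = S / P"
    unfolding h_def lincomb_def ph.hom_sum phi_smult[OF r] rf_at_frac[OF r de0] S_def P_def
    by (simp add: sum_divide_distrib)
  show "0 \<le> fls_subdegree (poly (map_poly (rf_at a r) g) Y)"
  proof (rule ccontr)
    assume neg: "\<not> 0 \<le> fls_subdegree (poly (map_poly (rf_at a r) g) Y)"
    define G where "G = phi a r Y g"
    have Gn: "fls_subdegree G < 0" using neg unfolding G_def phi_def by simp
    then have G0: "G \<noteq> 0" by auto
    have dG: "fls_subdegree (fls_deriv G) = fls_subdegree G - 1"
      using Gn by (intro fls_subdegree_deriv) simp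
    then have dG0: "fls_deriv G \<noteq> 0" using Gn by auto
    have eq: "fls_deriv G = rho r * phi a r Y h"
      unfolding G_def hg by (rule phi_A_deriv[OF irred r root])
    have h0: "phi a r Y h \<noteq> 0" using eq dG0 by auto
    have rp: "rho r \<noteq> (0 :: 'a alg_closure fls)" "fls_subdegree (rho r :: 'a alg_closure fls) = int r - 1"
      using rho_props[OF r] by blast+
    have "fls_subdegree (rho r * phi a r Y h) = fls_subdegree (rho r :: 'a alg_closure fls) + fls_subdegree (phi a r Y h)"
      by (rule fls_subdegree_mult) (use rp h0 in auto)
    then have "fls_subdegree (fls_deriv G) = int r - 1 + fls_subdegree (phi a r Y h)"
      using eq rp by simp
    then have lhs: "fls_subdegree (phi a r Y h) \<le> - 1 - int r" using dG Gn by simp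
    have S0: "S \<noteq> 0" using h0 phih by auto
    have "fls_subdegree (phi a r Y h) = fls_subdegree S - fls_subdegree P"
      unfolding phih using S0 P(1) by (simp add: divide_inverse)
    then show False using lhs S Pr by simp
  qed
qed

lemma mult_entry:
  assumes "A \<in> carrier_mat n k" "B \<in> carrier_mat k l" "i < n" "j < l"
  shows "(A * B) $$ (i, j) = (\<Sum>t<k. A $$ (i, t) * B $$ (t, j))"
  using assms by (auto simp: scalar_prod_def lessThan_atLeast0 intro!: sum.cong)

lemma lincomb_deg:
  assumes "\<forall>i<degree m. degree (w i) < degree m" "degree m \<ge> 1"
  shows "degree (lincomb m c w) < degree m"
proof -
  have "degree (lincomb m c w) \<le> degree m - 1"
    unfolding lincomb_def
  proof (rule degree_sum_le)
    fix i assume "i \<in> {..<degree m}"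
    then have "degree (w i) \<le> degree m - 1" using assms by auto
    then show "degree (smult (c i) (w i)) \<le> degree m - 1" using degree_smult_le order_trans by blast
  qed simp
  then show ?thesis using assms(2) by linarith
qed

lemma lincomb_cong: "(\<And>i. i < degree m \<Longrightarrow> c i = c' i) \<Longrightarrow> lincomb m c w = lincomb m c' w"
  unfolding lincomb_def by (rule sum.cong) auto

lemma lincomb_diff: "lincomb m (\<lambda>i. c i - c' i) w = lincomb m c w - lincomb m c' w"
  unfolding lincomb_def by (simp add: smult_diff_left sum_subtractf)

lemma smult_sum_right: "smult c (sum f S) = (\<Sum>i\<in>S. smult c (f i))"
  by (induction S rule: infinite_finite_induct) (simp_all add: smult_add_right)

lemma lincomb_smult: "smult a (lincomb m c w) = lincomb m (\<lambda>i. a * c i) w"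
  unfolding lincomb_def by (simp add: smult_sum_right)

lemma lincomb_expand:
  assumes "\<forall>i<degree m. W i = lincomb m (b i) U"
  shows "lincomb m x W = lincomb m (\<lambda>j. \<Sum>i<degree m. x i * b i j) U"
proof -
  have "lincomb m x W = (\<Sum>i<degree m. smult (x i) (lincomb m (b i) U))"
    unfolding lincomb_def[of m x W] using assms by (intro sum.cong) auto
  also have "\<dots> = (\<Sum>i<degree m. \<Sum>j<degree m. smult (x i * b i j) (U j))"
    unfolding lincomb_def by (simp add: smult_sum_right)
  also have "\<dots> = (\<Sum>j<degree m. \<Sum>i<degree m. smult (x i * b i j) (U j))"
    by (rule sum.swap)
  also have "\<dots> = lincomb m (\<lambda>j. \<Sum>i<degree m. x i * b i j) U"
    unfolding lincomb_def by (simp add: smult_sum)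
  finally show ?thesis .
qed

lemma indep_fract:
  fixes m :: "'a::{field_char_0,field_gcd} poly poly"
  assumes ib: "integral_basis m U" and z: "lincomb m c U = 0" and i: "i < degree m"
  shows "c i = 0"
proof -
  define n where "n = degree m"
  define qq where "qq = (\<lambda>j. snd (quot_of_fract (c j)))"
  define pp where "pp = (\<lambda>j. fst (quot_of_fract (c j)))"
  define D where "D = (\<Prod>j<n. qq j)"
  have qq0: "qq j \<noteq> 0" for j unfolding qq_def by simp
  have D0: "D \<noteq> 0" unfolding D_def using qq0 by simp
  have cj: "c j = to_fract (pp j) / to_fract (qq j)" for j
  proof -
    have "c j = Fract (pp j) (qq j)" unfolding pp_def qq_def by simp
    then show ?thesis by (simp add: Fract_conv_to_fract)
  qed
  define b where "b = (\<lambda>j. pp j * (D div qq j))"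
  have bj: "to_fract D * c j = to_fract (b j)" if j: "j < n" for j
  proof -
    have "qq j dvd D" unfolding D_def using j by (intro dvd_prodI) auto
    then have "D = qq j * (D div qq j)" by simp
    then have "to_fract D = to_fract (qq j) * to_fract (D div qq j)" by (metis to_fract_mult)
    then show ?thesis unfolding cj b_def using qq0[of j] by simp
  qed
  have "lincomb m (\<lambda>j. to_fract (b j)) U = lincomb m (\<lambda>j. to_fract D * c j) U"
    by (rule lincomb_cong) (simp add: bj n_def)
  also have "\<dots> = smult (to_fract D) (lincomb m c U)" by (simp add: lincomb_smult)
  also have "\<dots> = 0" using z by simp
  finally have "b i = 0" using ib i unfolding integral_basis_def by blast
  then have "to_fract D * c i = 0" using bj i n_def by simp
  then show ?thesis using D0 by simp
qed

lemma u_dvd_det: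
  fixes u :: "'a::{field_char_0,field_gcd} poly"
  assumes n: "\<forall>j<n. u * c j = (\<Sum>i<n. q i * T i j)"
    and g: "Gcd ({u} \<union> q ` {..<n}) = 1"
  shows "u dvd det (mat n n (\<lambda>(i, j). T i j))"
proof -
  define Tm where "Tm = mat n n (\<lambda>(i, j). T i j)"
  have Tc: "Tm \<in> carrier_mat n n" unfolding Tm_def by simp
  note adj = adj_mat[OF Tc]
  define A where "A = adj_mat Tm"
  have Ac: "A \<in> carrier_mat n n" using adj A_def by simp
  have k: "u dvd q k * det Tm" if k: "k < n" for k
  proof -
    have "q k * det Tm = (\<Sum>i<n. q i * (Tm * A) $$ (i, k))"
    proof -
      have "(\<Sum>i<n. q i * (Tm * A) $$ (i, k)) = (\<Sum>i<n. q i * (det Tm * (if i = k then 1 else 0)))"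
        using adj k unfolding A_def by (intro sum.cong) auto
      also have "\<dots> = q k * det Tm" using k by (simp add: if_distrib cong: if_cong)
      finally show ?thesis ..
    qed
    also have "\<dots> = (\<Sum>i<n. q i * (\<Sum>j<n. T i j * A $$ (j, k)))"
    proof (rule sum.cong)
      fix i assume i: "i \<in> {..<n}"
      have "(Tm * A) $$ (i, k) = (\<Sum>j<n. Tm $$ (i, j) * A $$ (j, k))"
        using i k by (intro mult_entry[OF Tc Ac]) auto
      also have "\<dots> = (\<Sum>j<n. T i j * A $$ (j, k))"
        using i by (intro sum.cong) (auto simp: Tm_def)
      finally show "q i * (Tm * A) $$ (i, k) = q i * (\<Sum>j<n. T i j * A $$ (j, k))" by simp
    qed simp
    also have "\<dots> = (\<Sum>i<n. \<Sum>j<n. q i * T i j * A $$ (j, k))"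
      by (simp add: sum_distrib_left mult.assoc)
    also have "\<dots> = (\<Sum>j<n. \<Sum>i<n. q i * T i j * A $$ (j, k))"
      by (rule sum.swap)
    also have "\<dots> = (\<Sum>j<n. (\<Sum>i<n. q i * T i j) * A $$ (j, k))"
      by (simp add: sum_distrib_right)
    also have "\<dots> = (\<Sum>j<n. u * c j * A $$ (j, k))"
      using n by simp
    also have "\<dots> = u * (\<Sum>j<n. c j * A $$ (j, k))"
      by (simp add: sum_distrib_left mult.assoc)
    finally show ?thesis by simp
  qed
  have "u dvd Gcd ((*) (det Tm) ` ({u} \<union> q ` {..<n}))"
    by (rule Gcd_greatest) (use k in \<open>auto simp: mult.commute\<close>)
  also have "\<dots> = normalize (det Tm)" unfolding Gcd_mult g by simp
  finally show ?thesis unfolding Tm_def by simp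
qed

lemma L_add: "A_trace m (f + g) = A_trace m f + A_trace m g"
  unfolding A_trace_def by (simp add: distrib_right poly_mod_add_left sum.distrib)

lemma L_smult: "A_trace m (smult c f) = c * A_trace m f"
  unfolding A_trace_def by (simp add: mod_smult_left sum_distrib_left)

lemma L_zero: "A_trace m 0 = 0"
  unfolding A_trace_def by simp

lemma L_sum: "A_trace m (sum f S) = (\<Sum>i\<in>S. A_trace m (f i))"
  by (induction S rule: infinite_finite_induct) (simp_all add: L_add L_zero)

lemma tr_amul: "A_trace m (amul m f g) = A_trace m (f * g)"
  unfolding A_trace_def amul_def by (simp add: mod_mult_left_eq)

lemma bilin:
  "A_trace m (lincomb m a U * lincomb m b U) =
   (\<Sum>k<degree m. \<Sum>l<degree m. a k * b l * A_trace m (U k * U l))"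
proof -
  have "lincomb m a U * lincomb m b U = (\<Sum>k<degree m. \<Sum>l<degree m. smult (a k * b l) (U k * U l))"
    unfolding lincomb_def sum_product
    by (intro sum.cong refl) (simp add: mult_smult_left mult_smult_right mult.commute)
  then show ?thesis by (simp add: L_sum L_smult)
qed

lemma disc_rel:
  fixes m :: "'a::{field_char_0,field_gcd} poly poly"
  assumes WTU: "\<forall>i<degree m. W i = lincomb m (\<lambda>j. to_fract (T i j)) U"
  shows "Disc m W = (to_fract (det (mat (degree m) (degree m) (\<lambda>(i, j). T i j))))^2 * Disc m U"
proof -
  define n where "n = degree m"
  define T' where "T' = mat n n (\<lambda>(i, j). to_fract (T i j))"
  define GU where "GU = mat n n (\<lambda>(i, j). A_trace m (amul m (U i) (U j)))"
  define GW where "GW = mat n n (\<lambda>(i, j). A_trace m (amul m (W i) (W j)))"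
  have c: "T' \<in> carrier_mat n n" "GU \<in> carrier_mat n n" "transpose_mat T' \<in> carrier_mat n n"
    unfolding T'_def GU_def by auto
  have GWe: "GW = T' * GU * transpose_mat T'"
  proof (rule eq_matI)
    fix i j assume "i < dim_row (T' * GU * transpose_mat T')" "j < dim_col (T' * GU * transpose_mat T')"
    then have i: "i < n" and j: "j < n" using c by auto
    have "(T' * GU * transpose_mat T') $$ (i, j) = (\<Sum>l<n. (T' * GU) $$ (i, l) * transpose_mat T' $$ (l, j))"
      by (rule mult_entry[OF mult_carrier_mat[OF c(1,2)] c(3) i j])
    also have "\<dots> = (\<Sum>l<n. (\<Sum>k<n. to_fract (T i k) * A_trace m (U k * U l)) * to_fract (T j l))"
    proof (rule sum.cong)
      fix l assume l: "l \<in> {..<n}"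
      have "(T' * GU) $$ (i, l) = (\<Sum>k<n. T' $$ (i, k) * GU $$ (k, l))"
        using l by (intro mult_entry[OF c(1,2) i]) auto
      also have "\<dots> = (\<Sum>k<n. to_fract (T i k) * A_trace m (U k * U l))"
        using i l by (intro sum.cong) (auto simp: T'_def GU_def tr_amul)
      finally show "(T' * GU) $$ (i, l) * transpose_mat T' $$ (l, j) = (\<Sum>k<n. to_fract (T i k) * A_trace m (U k * U l)) * to_fract (T j l)"
        using l j c by (simp add: T'_def)
    qed simp
    also have "\<dots> = (\<Sum>l<n. \<Sum>k<n. to_fract (T i k) * to_fract (T j l) * A_trace m (U k * U l))"
      by (intro sum.cong refl) (simp add: sum_distrib_right sum_distrib_left mult_ac)
    also have "\<dots> = (\<Sum>k<n. \<Sum>l<n. to_fract (T i k) * to_fract (T j l) * A_trace m (U k * U l))"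
      by (rule sum.swap)
    also have "\<dots> = A_trace m (W i * W j)"
      using WTU i j unfolding n_def by (simp add: bilin)
    also have "\<dots> = GW $$ (i, j)" using i j by (simp add: GW_def tr_amul)
    finally show "GW $$ (i, j) = (T' * GU * transpose_mat T') $$ (i, j)" ..
  qed (use c in \<open>auto simp: GW_def\<close>)
  have "det GW = det (T' * GU) * det (transpose_mat T')"
    unfolding GWe by (rule det_mult[OF mult_carrier_mat[OF c(1,2)] c(3)])
  also have "\<dots> = det T' * det GU * det T'"
    by (simp only: det_mult[OF c(1,2)] det_transpose[OF c(1)])
  finally have "det GW = det T' * det GU * det T'" .
  moreover have "det T' = to_fract (det (mat n n (\<lambda>(i, j). T i j)))"
  proof -
    interpret tf: inj_comm_ring_hom "to_fract :: 'a poly \<Rightarrow> 'a poly fract" by (unfold_locales, auto)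
    have "T' = map_mat to_fract (mat n n (\<lambda>(i, j). T i j))" unfolding T'_def by auto
    then show ?thesis by simp
  qed
  ultimately show ?thesis unfolding Disc_def GW_def[symmetric] GU_def[symmetric] n_def[symmetric] T'_def
    by (simp add: power2_eq_square algebra_simps)
qed

theorem lemma6:
  fixes m :: "'a::{field_char_0,field_gcd} poly poly"
    and W U :: "nat \<Rightarrow> 'a alg"
    and e d :: "'a poly"
    and M T :: "nat \<Rightarrow> nat \<Rightarrow> 'a poly"
    and hh :: "nat \<Rightarrow> 'a poly"
    and h :: "'a alg"
  assumes irred: "irreducible (modulus m)"
    and suit: "suitable_basis m W"
    and eM: "deriv_rel m W e M"
    and eM_gcd: "Gcd ({e} \<union> {M i j |i j. i < degree m \<and> j < degree m}) = 1"
    and d_nz: "d \<noteq> 0"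
    and gcd_de: "gcd d e = 1"
    and gcd_hd: "Gcd ({d} \<union> hh ` {..<degree m}) = 1"
    and sqf_d: "squarefree d"
    and h_def: "h = lincomb m (\<lambda>i. to_fract (hh i) / to_fract (d * e)) W"
    and U_ib: "integral_basis m U"
    and WTU: "\<forall>i<degree m. W i = lincomb m (\<lambda>j. to_fract (T i j)) U"
  shows "\<forall>u q. u \<noteq> 0 \<longrightarrow> Gcd ({u} \<union> q ` {..<degree m}) = 1 \<longrightarrow>
            h = A_deriv m (lincomb m (\<lambda>i. to_fract (q i) / to_fract u) W) \<longrightarrow>
            u dvd det (mat (degree m) (degree m) (\<lambda>(i, j). T i j)) \<and>
            (\<exists>p. Disc m W / Disc m U = to_fract (u ^ 2 * p))"
proof (intro allI impI)
  fix u :: "'a poly" and q :: "nat \<Rightarrow> 'a poly"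
  assume u0: "u \<noteq> 0" and gq: "Gcd ({u} \<union> q ` {..<degree m}) = 1"
    and hq: "h = A_deriv m (lincomb m (\<lambda>i. to_fract (q i) / to_fract u) W)"
  define n where "n = degree m"
  have Wint: "\<forall>i<degree m. integral m (W i)" using suit unfolding suitable_basis_def by blast
  have sqf_e: "squarefree e" using suit eM eM_gcd unfolding suitable_basis_def by blast
  have "coprime d e" using gcd_de by (simp add: coprime_iff_gcd_eq_1)
  then have sqf: "squarefree (d * e)" using sqf_d sqf_e by (rule squarefree_mult_coprime)
  define g where "g = lincomb m (\<lambda>i. to_fract (q i) / to_fract u) W"
  have gint: "integral m g"
    by (rule integral_g[OF irred Wint sqf h_def]) (simp add: hq g_def)
  have degm: "degree m \<ge> 1"
  proof -
    have "degree (modulus m) = degree m" unfolding modulus_def by (rule degree_map_poly) simp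
    moreover have "degree (modulus m) \<noteq> 0" using irred
      by (metis irreducible_def is_unit_iff_degree)
    ultimately show ?thesis by simp
  qed
  have degg: "degree g < degree m"
    unfolding g_def by (rule lincomb_deg) (use suit degm in \<open>auto simp: suitable_basis_def is_basis_def\<close>)
  obtain c where c: "g = lincomb m (\<lambda>i. to_fract (c i)) U"
    using U_ib degg gint unfolding integral_basis_def by blast
  have exp: "g = lincomb m (\<lambda>j. \<Sum>i<degree m. to_fract (q i) / to_fract u * to_fract (T i j)) U"
    unfolding g_def by (rule lincomb_expand[OF WTU])
  have rel: "u * c j = (\<Sum>i<n. q i * T i j)" if j: "j < n" for j
  proof -
    have "lincomb m (\<lambda>j. to_fract (c j) - (\<Sum>i<degree m. to_fract (q i) / to_fract u * to_fract (T i j))) U = 0"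
      unfolding lincomb_diff using c exp by simp
    then have "to_fract (c j) - (\<Sum>i<degree m. to_fract (q i) / to_fract u * to_fract (T i j)) = 0"
      using indep_fract[OF U_ib] j n_def by blast
    then have "to_fract u * to_fract (c j) = to_fract u * (\<Sum>i<n. to_fract (q i) / to_fract u * to_fract (T i j))"
      unfolding n_def by simp
    also have "\<dots> = (\<Sum>i<n. to_fract (q i) * to_fract (T i j))"
      using u0 by (simp add: sum_distrib_left)
    finally have "to_fract (u * c j) = to_fract (\<Sum>i<n. q i * T i j)" by simp
    then show ?thesis by (simp only: to_fract_eq_iff)
  qed
  have dv: "u dvd det (mat n n (\<lambda>(i, j). T i j))"
    by (rule u_dvd_det) (use rel gq n_def in auto)
  then obtain k where k: "det (mat n n (\<lambda>(i, j). T i j)) = u * k" by (elim dvdE)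
  have disc: "Disc m W = (to_fract (u * k))^2 * Disc m U"
    using disc_rel[OF WTU] k n_def by simp
  have "\<exists>p. Disc m W / Disc m U = to_fract (u ^ 2 * p)"
  proof (cases "Disc m U = 0")
    case True then show ?thesis by (intro exI[of _ 0]) simp
  next
    case False then show ?thesis unfolding disc
      by (intro exI[of _ "k^2"]) (simp add: power_mult_distrib power2_eq_square)
  qed
  then show "u dvd det (mat (degree m) (degree m) (\<lambda>(i, j). T i j)) \<and>
            (\<exists>p. Disc m W / Disc m U = to_fract (u ^ 2 * p))"
    using dv n_def by simp
qed

end
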